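(* Let $I=\{1,\dots,k+\ell\}\subseteq V$ where $C_1=\{1,\dots,k\}$ and $C_2=\{k+1,\dots,k+\ell\}$ are disjoint cliques of $G$ such that at least one vertex of $C_1$ and one vertex of $C_2$ are nonadjacent (edges between $C_1$ and $C_2$ may otherwise be arbitrary). Let $X_I$ be a symmetric matrix with $X_I\succeq 0$, $X_I\geq 0$ (entrywise), diagonal entries $x_1,\dots,x_{k+\ell}$, and $(X_I)_{i,j}=0$ for every edge $[i,j]$ of $G_I$ (in particular for distinct $i,j$ in the same clique). Then $X_I\in\mathrm{STAB}^2(G_I)$ if and only if $$\sum_{j=1}^{\ell}X_{i,k+j}\leq x_i\ (1\leq i\leq k),\qquad \sum_{i=1}^{k}X_{i,k+j}\leq x_{k+j}\ (1\leq j\leq \ell),\qquad \sum_{i=1}^{k+\ell}x_i\leq 1+\sum_{i=1}^k\sum_{j=1}^{\ell}X_{i,k+j}.$$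
   Context: Let $G$ be a simple graph with vertex set $V=\{1,\dots,n\}$ and edge set $E$; $G_I$ denotes the subgraph induced by $I\subseteq V$. For a graph $H$ with vertex set $I$, let $S(H)=\{s\in\{0,1\}^I: s_is_j=0\ \forall [i,j]\in E(H)\}$ (incidence vectors of stable sets, including the zero vector) and $\mathrm{STAB}^2(H)=\operatorname{conv}\{ss^T: s\in S(H)\}$. *)

theory Defs
  imports "HOL-Analysis.Analysis"
begin

definition simple_graph :: "nat set \<Rightarrow> (nat \<Rightarrow> nat \<Rightarrow> bool) \<Rightarrow> bool" where
  "simple_graph V E \<longleftrightarrow> (\<forall>i j. E i j \<longrightarrow> i \<in> V \<and> j \<in> V \<and> i \<noteq> j \<and> E j i)"

definition stable_vecs :: "(nat \<Rightarrow> nat \<Rightarrow> bool) \<Rightarrow> nat set \<Rightarrow> (nat \<Rightarrow> real) set" where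
  "stable_vecs E I = {s. (\<forall>i\<in>I. s i = 0 \<or> s i = 1) \<and> (\<forall>i. i \<notin> I \<longrightarrow> s i = 0)
                         \<and> (\<forall>i\<in>I. \<forall>j\<in>I. E i j \<longrightarrow> s i * s j = 0)}"

text \<open>STAB^2(G_I) = conv{s s^T : s in S(G_I)}, as a set of I x I matrices
  (a matrix X :: nat => nat => real is considered only through its entries indexed by I x I).\<close>
definition in_STAB2 :: "(nat \<Rightarrow> nat \<Rightarrow> bool) \<Rightarrow> nat set \<Rightarrow> (nat \<Rightarrow> nat \<Rightarrow> real) \<Rightarrow> bool" where
  "in_STAB2 E I X \<longleftrightarrow> (\<exists>F w. finite F \<and> F \<subseteq> stable_vecs E I \<and> (\<forall>s\<in>F. w s \<ge> (0::real))
      \<and> sum w F = 1 \<and> (\<forall>i\<in>I. \<forall>j\<in>I. X i j = (\<Sum>s\<in>F. w s * (s i * s j))))"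

definition psd_on :: "nat set \<Rightarrow> (nat \<Rightarrow> nat \<Rightarrow> real) \<Rightarrow> bool" where
  "psd_on I X \<longleftrightarrow> (\<forall>v :: nat \<Rightarrow> real. (\<Sum>i\<in>I. \<Sum>j\<in>I. v i * X i j * v j) \<ge> 0)"

end

theory Submission
  imports Defs
begin

lemma clique_le1:
  assumes s: "s \<in> stable_vecs E I" and CI: "C \<subseteq> I" and fC: "finite C"
    and cl: "\<forall>a\<in>C. \<forall>b\<in>C. a \<noteq> b \<longrightarrow> E a b"
  shows "sum s C \<le> 1 \<and> 0 \<le> sum s C"
proof (cases "\<exists>c\<in>C. s c \<noteq> 0")
  case True
  then obtain c where c: "c \<in> C" "s c \<noteq> 0" by blast
  have sc: "s c = 1" using s c CI unfolding stable_vecs_def by auto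
  have "\<forall>d\<in>C - {c}. s d = 0"
  proof
    fix d assume d: "d \<in> C - {c}"
    have "E c d" using cl c d by auto
    then have "s c * s d = 0" using s c d CI unfolding stable_vecs_def by blast
    then show "s d = 0" using sc by simp
  qed
  then have "sum s (C - {c}) = 0" by simp
  moreover have "sum s C = s c + sum s (C - {c})" using fC c by (simp add: sum.remove)
  ultimately show ?thesis using sc by simp
next
  case False
  then have "sum s C = 0" by simp
  then show ?thesis by simp
qed

lemma stab_from_family:
  fixes T :: "'a set" and v :: "'a \<Rightarrow> nat \<Rightarrow> real" and c :: "'a \<Rightarrow> real"
  assumes fT: "finite T" and vs: "\<forall>t\<in>T. v t \<in> stable_vecs E I" and cn: "\<forall>t\<in>T. c t \<ge> 0"
    and c1: "sum c T = 1"
    and X: "\<forall>i\<in>I. \<forall>j\<in>I. X i j = (\<Sum>t\<in>T. c t * (v t i * v t j))"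
  shows "in_STAB2 E I X"
proof -
  define w where "w s = sum c {t\<in>T. v t = s}" for s
  have "sum w (v ` T) = sum c T" using sum.image_gen[OF fT, of c v] unfolding w_def by simp
  moreover have "\<forall>s\<in>v ` T. w s \<ge> 0" unfolding w_def using cn by (auto intro: sum_nonneg)
  moreover have "\<forall>i\<in>I. \<forall>j\<in>I. X i j = (\<Sum>s\<in>v ` T. w s * (s i * s j))"
  proof (intro ballI)
    fix i j assume "i \<in> I" "j \<in> I"
    then have "X i j = (\<Sum>t\<in>T. c t * (v t i * v t j))" using X by blast
    also have "\<dots> = (\<Sum>s\<in>v ` T. \<Sum>t\<in>{t\<in>T. v t = s}. c t * (v t i * v t j))"
      using sum.image_gen[OF fT, of "\<lambda>t. c t * (v t i * v t j)" v] by simp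
    also have "\<dots> = (\<Sum>s\<in>v ` T. \<Sum>t\<in>{t\<in>T. v t = s}. c t * (s i * s j))"
      by (intro sum.cong refl) auto
    also have "\<dots> = (\<Sum>s\<in>v ` T. w s * (s i * s j))"
      unfolding w_def by (simp add: sum_distrib_right)
    finally show "X i j = (\<Sum>s\<in>v ` T. w s * (s i * s j))" .
  qed
  ultimately show ?thesis unfolding in_STAB2_def using fT vs c1
    by (intro exI[of _ "v ` T"] exI[of _ w]) auto
qed

lemma zero_stable: "(\<lambda>_. 0) \<in> stable_vecs E I"
  unfolding stable_vecs_def by simp

lemma stab_from_family_le:
  fixes T :: "'a set" and v :: "'a \<Rightarrow> nat \<Rightarrow> real" and c :: "'a \<Rightarrow> real"
  assumes fT: "finite T" and vs: "\<forall>t\<in>T. v t \<in> stable_vecs E I" and cn: "\<forall>t\<in>T. c t \<ge> 0"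
    and c1: "sum c T \<le> 1"
    and X: "\<forall>i\<in>I. \<forall>j\<in>I. X i j = (\<Sum>t\<in>T. c t * (v t i * v t j))"
  shows "in_STAB2 E I X"
proof -
  define v' where "v' z = (case z of None \<Rightarrow> (\<lambda>_. 0) | Some t \<Rightarrow> v t)" for z
  define c' where "c' z = (case z of None \<Rightarrow> 1 - sum c T | Some t \<Rightarrow> c t)" for z
  have nn: "None \<notin> Some ` T" by auto
  show ?thesis
  proof (rule stab_from_family[of "insert None (Some ` T)" v' E I c'])
    show "finite (insert None (Some ` T))" using fT by simp
    show "\<forall>t\<in>insert None (Some ` T). v' t \<in> stable_vecs E I"
      using vs zero_stable unfolding v'_def by auto
    show "\<forall>t\<in>insert None (Some ` T). 0 \<le> c' t" using cn c1 unfolding c'_def by auto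
    show "sum c' (insert None (Some ` T)) = 1" using fT nn
      by (simp add: sum.reindex c'_def)
    show "\<forall>i\<in>I. \<forall>j\<in>I. X i j = (\<Sum>t\<in>insert None (Some ` T). c' t * (v' t i * v' t j))"
      using X fT nn by (simp add: sum.reindex c'_def v'_def)
  qed
qed


lemma shift_sum: "(\<Sum>j=1..l. f (k+j)) = sum f {k+1..k+(l::nat)}"
  using sum.shift_bounds_cl_nat_ivl[of f 1 k l] by (simp add: add.commute)

lemma split_sum: "sum f {1..k+(l::nat)} = sum f {1..k} + sum f {k+1..k+l}"
proof -
  have "{1..k+l} = {1..k} \<union> {k+1..k+l}" by auto
  then show ?thesis by (simp add: sum.union_disjoint ivl_disj_int)
qed

lemma per_s:
  assumes s: "s \<in> stable_vecs E {1..k+l}"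
    and C1: "\<forall>i\<in>{1..k}. \<forall>j\<in>{1..k}. i \<noteq> j \<longrightarrow> E i j"
    and C2: "\<forall>i\<in>{k+1..k+l}. \<forall>j\<in>{k+1..k+l}. i \<noteq> j \<longrightarrow> E i j"
  shows "\<forall>i\<in>{1..k}. (\<Sum>j=1..l. s i * s (k+j)) \<le> s i * s i"
    and "\<forall>j\<in>{1..l}. (\<Sum>i=1..k. s i * s (k+j)) \<le> s (k+j) * s (k+j)"
    and "(\<Sum>i=1..k+l. s i * s i) \<le> 1 + (\<Sum>i=1..k. \<Sum>j=1..l. s i * s (k+j))"
proof -
  have p: "sum s {1..k} \<le> 1 \<and> 0 \<le> sum s {1..k}"
    by (rule clique_le1[OF s _ _ C1]) auto
  have q: "sum s {k+1..k+l} \<le> 1 \<and> 0 \<le> sum s {k+1..k+l}"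
    by (rule clique_le1[OF s _ _ C2]) auto
  have b01: "\<And>i. i \<in> {1..k+l} \<Longrightarrow> s i = 0 \<or> s i = 1" using s unfolding stable_vecs_def by blast
  have sq: "\<And>i. i \<in> {1..k+l} \<Longrightarrow> s i * s i = s i" using b01 by fastforce
  show "\<forall>i\<in>{1..k}. (\<Sum>j=1..l. s i * s (k+j)) \<le> s i * s i"
  proof
    fix i assume i: "i \<in> {1..k}"
    have "(\<Sum>j=1..l. s i * s (k+j)) = s i * sum s {k+1..k+l}"
      by (simp only: shift_sum[of s k l, symmetric] sum_distrib_left)
    moreover have "s i * sum s {k+1..k+l} \<le> s i * 1" using q b01[of i] i by (intro mult_left_mono) auto
    moreover have "s i * s i = s i" using sq i by auto
    ultimately show "(\<Sum>j=1..l. s i * s (k+j)) \<le> s i * s i" by linarith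
  qed
  show "\<forall>j\<in>{1..l}. (\<Sum>i=1..k. s i * s (k+j)) \<le> s (k+j) * s (k+j)"
  proof
    fix j assume j: "j \<in> {1..l}"
    have "(\<Sum>i=1..k. s i * s (k+j)) = sum s {1..k} * s (k+j)"
      by (simp add: sum_distrib_right)
    moreover have "sum s {1..k} * s (k+j) \<le> 1 * s (k+j)" using p b01[of "k+j"] j by (intro mult_right_mono) auto
    moreover have "s (k+j) * s (k+j) = s (k+j)" using sq j by auto
    ultimately show "(\<Sum>i=1..k. s i * s (k+j)) \<le> s (k+j) * s (k+j)" by linarith
  qed
  have "(\<Sum>i=1..k+l. s i * s i) = (\<Sum>i=1..k+l. s i)" using sq by (intro sum.cong) auto
  also have "\<dots> = sum s {1..k} + sum s {k+1..k+l}" by (rule split_sum)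
  also have "\<dots> \<le> 1 + sum s {1..k} * sum s {k+1..k+l}"
  proof -
    have "0 \<le> (1 - sum s {1..k}) * (1 - sum s {k+1..k+l})" using p q by (intro mult_nonneg_nonneg) auto
    then show ?thesis by (simp add: algebra_simps)
  qed
  also have "sum s {1..k} * sum s {k+1..k+l} = (\<Sum>i=1..k. \<Sum>j=1..l. s i * s (k+j))"
    by (simp only: shift_sum[of s k l, symmetric] sum_product)
  finally show "(\<Sum>i=1..k+l. s i * s i) \<le> 1 + (\<Sum>i=1..k. \<Sum>j=1..l. s i * s (k+j))" .
qed


lemma sum_if_const: "(\<Sum>j\<in>A. if P then f j else 0) = (if P then sum f A else 0)"
  by auto

lemma pairsum:
  fixes Y :: "nat \<Rightarrow> nat \<Rightarrow> real"
  assumes p: "p \<in> {1..k+l}" and q: "q \<in> {1..k+l}"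
  shows "(\<Sum>i=1..k. \<Sum>j=1..l. Y i j * ((if p = i \<or> p = k+j then 1 else 0) * (if q = i \<or> q = k+j then 1 else 0))) =
    (if p \<le> k then (if q \<le> k then (if p = q then (\<Sum>j=1..l. Y p j) else 0) else Y p (q-k))
     else (if q \<le> k then Y q (p-k) else (if p = q then (\<Sum>i=1..k. Y i (p-k)) else 0)))"
proof (cases "p \<le> k")
  case pk: True
  show ?thesis
  proof (cases "q \<le> k")
    case qk: True
    have "(\<Sum>i=1..k. \<Sum>j=1..l. Y i j * ((if p = i \<or> p = k+j then 1 else 0) * (if q = i \<or> q = k+j then 1 else 0)))
      = (\<Sum>i=1..k. \<Sum>j=1..l. if i = p then (if p = q then Y p j else 0) else 0)"
      using pk qk by (intro sum.cong refl) auto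
    also have "\<dots> = (if p = q then (\<Sum>j=1..l. Y p j) else 0)" using pk p by (auto simp add: sum_if_const sum.delta')
    finally show ?thesis using pk qk by simp
  next
    case qk: False
    have "(\<Sum>i=1..k. \<Sum>j=1..l. Y i j * ((if p = i \<or> p = k+j then 1 else 0) * (if q = i \<or> q = k+j then 1 else 0)))
      = (\<Sum>i=1..k. \<Sum>j=1..l. if i = p then (if j = q - k then Y p j else 0) else 0)"
      using pk qk by (intro sum.cong refl) auto
    also have "\<dots> = Y p (q-k)" using pk p q qk by (auto simp add: sum_if_const sum.delta')
    finally show ?thesis using pk qk by simp
  qed
next
  case pk: False
  show ?thesis
  proof (cases "q \<le> k")
    case qk: True
    have "(\<Sum>i=1..k. \<Sum>j=1..l. Y i j * ((if p = i \<or> p = k+j then 1 else 0) * (if q = i \<or> q = k+j then 1 else 0)))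
      = (\<Sum>i=1..k. \<Sum>j=1..l. if i = q then (if j = p - k then Y q j else 0) else 0)"
      using pk qk by (intro sum.cong refl) auto
    also have "\<dots> = Y q (p-k)" using pk p q qk by (auto simp add: sum_if_const sum.delta')
    finally show ?thesis using pk qk by simp
  next
    case qk: False
    have "(\<Sum>i=1..k. \<Sum>j=1..l. Y i j * ((if p = i \<or> p = k+j then 1 else 0) * (if q = i \<or> q = k+j then 1 else 0)))
      = (\<Sum>i=1..k. \<Sum>j=1..l. if p = q then (if j = p - k then Y i j else 0) else 0)"
      using pk qk by (intro sum.cong refl) auto
    also have "\<dots> = (if p = q then (\<Sum>i=1..k. Y i (p-k)) else 0)" using pk p q qk by (auto simp add: sum_if_const sum.delta')
    finally show ?thesis using pk qk by simp
  qed
qed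

lemma diagsum:
  fixes a :: "nat \<Rightarrow> real"
  assumes "finite I" "p \<in> I"
  shows "(\<Sum>i\<in>I. a i * ((if p = i then 1 else 0) * (if q = i then 1 else 0))) = (if p = q then a p else 0)"
proof -
  have "(\<Sum>i\<in>I. a i * ((if p = i then 1 else 0) * (if q = i then 1 else 0))) = (\<Sum>i\<in>I. if i = p then (if p = q then a p else 0) else 0)"
    by (intro sum.cong refl) auto
  then show ?thesis using assms by (auto simp add: sum_if_const sum.delta')
qed


lemma wsum_mono:
  assumes "\<forall>s\<in>F. (w s::real) \<ge> 0" "\<forall>s\<in>F. f s \<le> g s"
  shows "(\<Sum>s\<in>F. w s * f s) \<le> (\<Sum>s\<in>F. w s * g s)"
  using assms by (intro sum_mono mult_left_mono) auto

theorem lemmaC1: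
  fixes n k l :: nat and E :: "nat \<Rightarrow> nat \<Rightarrow> bool" and X :: "nat \<Rightarrow> nat \<Rightarrow> real"
  assumes G: "simple_graph {1..n} E"
    and IV: "k + l \<le> n"
    and C1: "\<forall>i\<in>{1..k}. \<forall>j\<in>{1..k}. i \<noteq> j \<longrightarrow> E i j"
    and C2: "\<forall>i\<in>{k+1..k+l}. \<forall>j\<in>{k+1..k+l}. i \<noteq> j \<longrightarrow> E i j"
    and nonadj: "\<exists>i\<in>{1..k}. \<exists>j\<in>{k+1..k+l}. \<not> E i j"
    and sym: "\<forall>i\<in>{1..k+l}. \<forall>j\<in>{1..k+l}. X i j = X j i"
    and psd: "psd_on {1..k+l} X"
    and nonneg: "\<forall>i\<in>{1..k+l}. \<forall>j\<in>{1..k+l}. X i j \<ge> 0"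
    and zero: "\<forall>i\<in>{1..k+l}. \<forall>j\<in>{1..k+l}. E i j \<longrightarrow> X i j = 0"
  shows "in_STAB2 E {1..k+l} X \<longleftrightarrow>
           (\<forall>i\<in>{1..k}. (\<Sum>j=1..l. X i (k+j)) \<le> X i i)
         \<and> (\<forall>j\<in>{1..l}. (\<Sum>i=1..k. X i (k+j)) \<le> X (k+j) (k+j))
         \<and> (\<Sum>i=1..k+l. X i i) \<le> 1 + (\<Sum>i=1..k. \<Sum>j=1..l. X i (k+j))"
proof
  assume "in_STAB2 E {1..k+l} X"
  then obtain F w where fF: "finite F" and FS: "F \<subseteq> stable_vecs E {1..k+l}"
    and w0: "\<forall>s\<in>F. w s \<ge> 0" and w1: "sum w F = 1"
    and Xe: "\<forall>i\<in>{1..k+l}. \<forall>j\<in>{1..k+l}. X i j = (\<Sum>s\<in>F. w s * (s i * s j))"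
    unfolding in_STAB2_def by blast
  have ps: "\<And>s. s \<in> F \<Longrightarrow> s \<in> stable_vecs E {1..k+l}" using FS by blast
  have r1: "\<forall>i\<in>{1..k}. (\<Sum>j=1..l. X i (k+j)) \<le> X i i"
  proof
    fix i assume i: "i \<in> {1..k}"
    have "(\<Sum>j=1..l. X i (k+j)) = (\<Sum>j=1..l. \<Sum>s\<in>F. w s * (s i * s (k+j)))"
      using Xe i by (intro sum.cong refl) auto
    also have "\<dots> = (\<Sum>s\<in>F. w s * (\<Sum>j=1..l. s i * s (k+j)))"
      by (simp add: sum.swap[of _ F] sum_distrib_left)
    also have "\<dots> \<le> (\<Sum>s\<in>F. w s * (s i * s i))"
      using w0 per_s(1)[OF ps C1 C2] i by (intro wsum_mono) auto
    also have "\<dots> = X i i" using Xe i by auto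
    finally show "(\<Sum>j=1..l. X i (k+j)) \<le> X i i" .
  qed
  have r2: "\<forall>j\<in>{1..l}. (\<Sum>i=1..k. X i (k+j)) \<le> X (k+j) (k+j)"
  proof
    fix j assume j: "j \<in> {1..l}"
    have "(\<Sum>i=1..k. X i (k+j)) = (\<Sum>i=1..k. \<Sum>s\<in>F. w s * (s i * s (k+j)))"
      using Xe j by (intro sum.cong refl) auto
    also have "\<dots> = (\<Sum>s\<in>F. w s * (\<Sum>i=1..k. s i * s (k+j)))"
      by (simp add: sum.swap[of _ F] sum_distrib_left)
    also have "\<dots> \<le> (\<Sum>s\<in>F. w s * (s (k+j) * s (k+j)))"
      using w0 per_s(2)[OF ps C1 C2] j by (intro wsum_mono) auto
    also have "\<dots> = X (k+j) (k+j)" using Xe j by auto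
    finally show "(\<Sum>i=1..k. X i (k+j)) \<le> X (k+j) (k+j)" .
  qed
  have "(\<Sum>i=1..k+l. X i i) = (\<Sum>i=1..k+l. \<Sum>s\<in>F. w s * (s i * s i))"
    using Xe by (intro sum.cong refl) auto
  also have "\<dots> = (\<Sum>s\<in>F. w s * (\<Sum>i=1..k+l. s i * s i))"
    by (simp add: sum.swap[of _ F] sum_distrib_left)
  also have "\<dots> \<le> (\<Sum>s\<in>F. w s * (1 + (\<Sum>i=1..k. \<Sum>j=1..l. s i * s (k+j))))"
    using w0 per_s(3)[OF ps C1 C2] by (intro wsum_mono) auto
  also have "\<dots> = 1 + (\<Sum>s\<in>F. w s * (\<Sum>i=1..k. \<Sum>j=1..l. s i * s (k+j)))"
    using w1 by (simp add: distrib_left sum.distrib)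
  also have "(\<Sum>s\<in>F. w s * (\<Sum>i=1..k. \<Sum>j=1..l. s i * s (k+j))) = (\<Sum>i=1..k. \<Sum>j=1..l. \<Sum>s\<in>F. w s * (s i * s (k+j)))"
    by (simp add: sum_distrib_left sum.swap[of _ F])
  also have "\<dots> = (\<Sum>i=1..k. \<Sum>j=1..l. X i (k+j))"
    using Xe by (intro sum.cong refl) auto
  finally have r3: "(\<Sum>i=1..k+l. X i i) \<le> 1 + (\<Sum>i=1..k. \<Sum>j=1..l. X i (k+j))" .
  show "(\<forall>i\<in>{1..k}. (\<Sum>j=1..l. X i (k+j)) \<le> X i i)
         \<and> (\<forall>j\<in>{1..l}. (\<Sum>i=1..k. X i (k+j)) \<le> X (k+j) (k+j))
         \<and> (\<Sum>i=1..k+l. X i i) \<le> 1 + (\<Sum>i=1..k. \<Sum>j=1..l. X i (k+j))"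
    using r1 r2 r3 by blast
next
  assume "(\<forall>i\<in>{1..k}. (\<Sum>j=1..l. X i (k+j)) \<le> X i i)
         \<and> (\<forall>j\<in>{1..l}. (\<Sum>i=1..k. X i (k+j)) \<le> X (k+j) (k+j))
         \<and> (\<Sum>i=1..k+l. X i i) \<le> 1 + (\<Sum>i=1..k. \<Sum>j=1..l. X i (k+j))"
  then have h1: "\<forall>i\<in>{1..k}. (\<Sum>j=1..l. X i (k+j)) \<le> X i i"
    and h2: "\<forall>j\<in>{1..l}. (\<Sum>i=1..k. X i (k+j)) \<le> X (k+j) (k+j)"
    and h3: "(\<Sum>i=1..k+l. X i i) \<le> 1 + (\<Sum>i=1..k. \<Sum>j=1..l. X i (k+j))" by blast+
  define a :: "nat \<Rightarrow> real" where "a i = (if i \<le> k then X i i - (\<Sum>j=1..l. X i (k+j)) else X i i - (\<Sum>i'=1..k. X i' i))" for i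
  define v :: "nat + nat \<times> nat \<Rightarrow> nat \<Rightarrow> real" where "v z = (case z of Inl i \<Rightarrow> (\<lambda>t. if t = i then 1 else 0)
     | Inr ij \<Rightarrow> (if E (fst ij) (k + snd ij) then (\<lambda>_. 0) else (\<lambda>t. if t = fst ij \<or> t = k + snd ij then 1 else 0)))" for z
  define c :: "nat + nat \<times> nat \<Rightarrow> real" where "c z = (case z of Inl i \<Rightarrow> a i | Inr ij \<Rightarrow> X (fst ij) (k + snd ij))" for z
  define T where "T = Inl ` {1..k+l} \<union> Inr ` ({1..k} \<times> {1..l})"
  have fT: "finite T" unfolding T_def by simp
  have decomp: "sum g T = (\<Sum>i=1..k+l. g (Inl i)) + (\<Sum>i=1..k. \<Sum>j=1..l. g (Inr (i,j)))" for g :: "nat + nat \<times> nat \<Rightarrow> real"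
  proof -
    have "sum g T = sum g (Inl ` {1..k+l}) + sum g (Inr ` ({1..k}\<times>{1..l}))"
      unfolding T_def by (rule sum.union_disjoint) auto
    also have "\<dots> = (\<Sum>i=1..k+l. g (Inl i)) + (\<Sum>i=1..k. \<Sum>j=1..l. g (Inr (i,j)))"
      by (simp add: sum.reindex sum.cartesian_product)
    finally show ?thesis .
  qed
  have irr: "\<And>i j. E i j \<Longrightarrow> i \<noteq> j \<and> E j i" using G unfolding simple_graph_def by blast
  show "in_STAB2 E {1..k+l} X"
  proof (rule stab_from_family_le[of T v E "{1..k+l}" c X])
    show "finite T" by (rule fT)
    show "\<forall>t\<in>T. v t \<in> stable_vecs E {1..k+l}"
    proof
      fix t assume "t \<in> T"
      then consider (L) i where "t = Inl i" "i \<in> {1..k+l}" | (R) i j where "t = Inr (i,j)" "i \<in> {1..k}" "j \<in> {1..l}"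
        unfolding T_def by blast
      then show "v t \<in> stable_vecs E {1..k+l}"
      proof cases
        case L
        then show ?thesis unfolding v_def stable_vecs_def using irr by auto
      next
        case R
        show ?thesis
        proof (cases "E i (k+j)")
          case True
          then show ?thesis using R zero_stable unfolding v_def by simp
        next
          case False
          then show ?thesis using R irr unfolding v_def stable_vecs_def by auto
        qed
      qed
    qed
    show "\<forall>t\<in>T. 0 \<le> c t"
    proof
      fix t assume "t \<in> T"
      then consider (L) i where "t = Inl i" "i \<in> {1..k+l}" | (R) i j where "t = Inr (i,j)" "i \<in> {1..k}" "j \<in> {1..l}"
        unfolding T_def by blast
      then show "0 \<le> c t"
      proof cases
        case L
        show ?thesis
        proof (cases "i \<le> k")
          case True
          then show ?thesis using L h1 unfolding c_def a_def by auto
        next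
          case False
          then have "i - k \<in> {1..l}" "k + (i - k) = i" using L by auto
          then have "(\<Sum>i'=1..k. X i' i) \<le> X i i" using h2 by metis
          then show ?thesis using L False unfolding c_def a_def by simp
        qed
      next
        case R
        then show ?thesis using nonneg unfolding c_def by auto
      qed
    qed
    show "sum c T \<le> 1"
    proof -
      have sa: "(\<Sum>i=1..k+l. a i) = (\<Sum>i=1..k. X i i) - (\<Sum>i=1..k. \<Sum>j=1..l. X i (k+j))
          + ((\<Sum>j=1..l. X (k+j) (k+j)) - (\<Sum>j=1..l. \<Sum>i=1..k. X i (k+j)))"
      proof -
        have "(\<Sum>i=1..k+l. a i) = sum a {1..k} + (\<Sum>j=1..l. a (k+j))" by (simp only: split_sum[of a k l] shift_sum[of a k l])
        also have "sum a {1..k} = (\<Sum>i=1..k. X i i - (\<Sum>j=1..l. X i (k+j)))"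
          unfolding a_def by (intro sum.cong refl) auto
        also have "(\<Sum>j=1..l. a (k+j)) = (\<Sum>j=1..l. X (k+j) (k+j) - (\<Sum>i=1..k. X i (k+j)))"
          unfolding a_def by (intro sum.cong refl) auto
        finally show ?thesis by (simp add: sum_subtractf)
      qed
      have sx: "(\<Sum>i=1..k+l. X i i) = (\<Sum>i=1..k. X i i) + (\<Sum>j=1..l. X (k+j) (k+j))"
        by (simp only: split_sum[of "\<lambda>i. X i i" k l] shift_sum[of "\<lambda>i. X i i" k l])
      have sw: "(\<Sum>j=1..l. \<Sum>i=1..k. X i (k+j)) = (\<Sum>i=1..k. \<Sum>j=1..l. X i (k+j))"
        by (rule sum.swap)
      have "sum c T = (\<Sum>i=1..k+l. a i) + (\<Sum>i=1..k. \<Sum>j=1..l. X i (k+j))"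
        unfolding decomp c_def by simp
      then show ?thesis using sa sx sw h3 by linarith
    qed
    show "\<forall>p\<in>{1..k+l}. \<forall>q\<in>{1..k+l}. X p q = (\<Sum>t\<in>T. c t * (v t p * v t q))"
    proof (intro ballI)
      fix p q assume p: "p \<in> {1..k+l}" and q: "q \<in> {1..k+l}"
      have "(\<Sum>t\<in>T. c t * (v t p * v t q)) = (\<Sum>i=1..k+l. a i * ((if p = i then 1 else 0) * (if q = i then 1 else 0)))
         + (\<Sum>i=1..k. \<Sum>j=1..l. X i (k+j) * ((if p = i \<or> p = k+j then 1 else 0) * (if q = i \<or> q = k+j then 1 else 0)))"
      proof -
        have "(\<Sum>t\<in>T. c t * (v t p * v t q)) = (\<Sum>i=1..k+l. a i * ((if p = i then 1 else 0) * (if q = i then 1 else 0)))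
         + (\<Sum>i=1..k. \<Sum>j=1..l. X i (k+j) * (v (Inr (i,j)) p * v (Inr (i,j)) q))"
          unfolding decomp by (simp add: c_def v_def)
        also have "(\<Sum>i=1..k. \<Sum>j=1..l. X i (k+j) * (v (Inr (i,j)) p * v (Inr (i,j)) q))
          = (\<Sum>i=1..k. \<Sum>j=1..l. X i (k+j) * ((if p = i \<or> p = k+j then 1 else 0) * (if q = i \<or> q = k+j then 1 else 0)))"
        proof (intro sum.cong refl)
          fix i j assume i: "i \<in> {1..k}" and j: "j \<in> {1..l}"
          show "X i (k+j) * (v (Inr (i,j)) p * v (Inr (i,j)) q) = X i (k+j) * ((if p = i \<or> p = k+j then 1 else 0) * (if q = i \<or> q = k+j then 1 else 0))"
          proof (cases "E i (k+j)")
            case True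
            then have "X i (k+j) = 0" using zero i j by auto
            then show ?thesis by simp
          qed (simp add: v_def)
        qed
        finally show ?thesis .
      qed
      also have "\<dots> = (if p = q then a p else 0) +
         (if p \<le> k then (if q \<le> k then (if p = q then (\<Sum>j=1..l. X p (k+j)) else 0) else X p (k + (q-k)))
           else (if q \<le> k then X q (k + (p-k)) else (if p = q then (\<Sum>i=1..k. X i (k + (p-k))) else 0)))"
        using diagsum[of "{1..k+l}" p a q] pairsum[OF p q, of "\<lambda>i j. X i (k+j)"] p by simp
      also have "\<dots> = X p q"
      proof (cases "p \<le> k")
        case pk: True
        show ?thesis
        proof (cases "q \<le> k")
          case qk: True
          show ?thesis
          proof (cases "p = q")
            case True then show ?thesis using pk qk unfolding a_def by simp
          next
            case False
            then have "E p q" using C1 pk qk p q by auto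
            then show ?thesis using zero p q pk qk False by auto
          qed
        next
          case qk: False then show ?thesis using pk by simp
        qed
      next
        case pk: False
        show ?thesis
        proof (cases "q \<le> k")
          case qk: True then show ?thesis using pk sym p q by simp
        next
          case qk: False
          show ?thesis
          proof (cases "p = q")
            case True then show ?thesis using pk qk unfolding a_def by simp
          next
            case False
            then have "E p q" using C2 pk qk p q by auto
            then show ?thesis using zero p q pk qk False by auto
          qed
        qed
      qed
      finally show "X p q = (\<Sum>t\<in>T. c t * (v t p * v t q))" by simp
    qed
  qed
qed

end
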